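(* Let $p\ge3$ be a prime and $d\in D_p$. (1) If $p=3$, then (a) $\binom{2d}{d}_{\#3}=\binom{3d}{d}_{\#3}$; (b) $\binom{2d+1}{d}_{\#3}=\binom{3d+2}{d}_{\#3}$; and for all integers $a$ with $0\le a\le 2d$: (c) $\big(\binom ad\binom{3d-a}{d}\big)_{\#3}\ge\binom{2d}{d}_{\#3}$; (d) $\big(\binom ad\binom{3d-1-a}{d}\big)_{\#3}\ge\binom{2d}{d}_{\#3}$; (e) $\big(\binom ad\binom{3d+1-a}{d+1}\big)_{\#3}\ge\binom{2d+1}{d}_{\#3}$. (2) If $p\ge5$, then (a) $\binom{2d}{d}_{\#p}=\binom{3d}{d}_{\#p}$; and for all integers $a$ with $0\le a\le 2d$: (b) $\big(\binom ad\binom{3d-a}{d}\big)_{\#p}\ge\binom{2d}d_{\#p}$; (c) $\big(\binom ad\binom{3d-1-a}{d}\big)_{\#p}\ge\binom{2d}d_{\#p}$; (d) $\big(\binom a{d-1}\binom{3d-2-a}{d}\big)_{\#p}\ge\binom{2d}d_{\#p}$.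
   Context: For an integer $M$ and prime $p$, $M_{\#p}=\sup\{k: p^k\mid M\}$ (so $0_{\#p}=\infty$); $\binom{m}{i}_{\#p}$ means $(\binom mi)_{\#p}$. For integers $m,i$: $\binom mi=\frac{m(m-1)\cdots(m-i+1)}{i!}$ if $i>0$, $1$ if $i=0$, $0$ if $i<0$. Sets $D_p$: $D_3$ is the smallest set of non-negative integers containing $0$ such that $d\in D_3$ implies $3d,3d+2\in D_3$. For a prime $p\ge5$, let $\pi_p$ be the largest integer with $\pi_p<p/3$; $D_p$ is the smallest set of non-negative integers containing $[0,\pi_p]\cap\mathbb Z$ such that for each $d\in D_p$, every non-negative integer in $[pd-\pi_p,pd+\pi_p]$ lies in $D_p$. *)

theory Defs
  imports "HOL-Computational_Algebra.Computational_Algebra" "HOL-Library.Extended_Nat"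
begin

definition ibinom :: "int \<Rightarrow> int \<Rightarrow> int" where
  "ibinom m i = (if i < 0 then 0
                 else (\<Prod>j<nat i. (m - int j)) div fact (nat i))"

definition vp :: "nat \<Rightarrow> int \<Rightarrow> enat" where
  "vp p M = (if M = 0 then \<infinity> else enat (multiplicity (int p) M))"

inductive_set D3 :: "nat set" where
  D3_zero: "0 \<in> D3"
| D3_mult: "d \<in> D3 \<Longrightarrow> 3 * d \<in> D3"
| D3_plus2: "d \<in> D3 \<Longrightarrow> 3 * d + 2 \<in> D3"

text \<open>pi_p = largest integer strictly less than p/3.\<close>
definition pip :: "nat \<Rightarrow> int" where
  "pip p = (int p - 1) div 3"

inductive_set Dgen :: "nat \<Rightarrow> nat set" for p :: nat where
  Dgen_base: "int d \<le> pip p \<Longrightarrow> d \<in> Dgen p"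
| Dgen_step: "d \<in> Dgen p \<Longrightarrow> int p * int d - pip p \<le> int e \<Longrightarrow>
              int e \<le> int p * int d + pip p \<Longrightarrow> e \<in> Dgen p"

definition Dp :: "nat \<Rightarrow> nat set" where
  "Dp p = (if p = 3 then D3 else Dgen p)"

end

theory Submission imports Defs begin

lemma sum_ind_card: "finite A \<Longrightarrow> (\<Sum>k\<in>A. (if P k then 1 else 0::nat)) = card {k\<in>A. P k}"
  by (simp add: sum.If_cases Int_def conj_commute)

lemma mult_card:
  fixes p m N :: nat
  assumes p: "prime p" and m: "0 < m" "m \<le> N"
  shows "multiplicity p m = card {k\<in>{1..N}. p^k dvd m}"
proof -
  define j where "j = multiplicity p m"
  have "p ^ j dvd m" unfolding j_def by (rule multiplicity_dvd)
  hence "p ^ j \<le> m" using m by (simp add: dvd_imp_le)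
  moreover have "j < p ^ j"
  proof -
    have "j < 2 ^ j" by (rule less_exp)
    also have "(2::nat) ^ j \<le> p ^ j" by (rule power_mono) (use prime_ge_2_nat[OF p] in auto)
    finally show ?thesis .
  qed
  ultimately have jN: "j \<le> N" using m by linarith
  have nu: "\<not> is_unit p" using p not_prime_unit by blast
  have dv: "\<And>k. p^k dvd m \<longleftrightarrow> k \<le> j"
    unfolding j_def by (rule power_dvd_iff_le_multiplicity) (use m nu in auto)
  have "{k\<in>{1..N}. p^k dvd m} = {1..j}"
    using jN by (auto simp: dv)
  thus ?thesis unfolding j_def by simp
qed

lemma div_Suc_ind: "0 < q \<Longrightarrow> Suc n div q = n div q + (if q dvd Suc n then 1 else 0)"
  by (auto simp: div_Suc dvd_eq_mod_eq_0)

lemma mult_fact: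
  fixes p n N :: nat
  assumes p: "prime p" and n: "n \<le> N"
  shows "multiplicity p (fact n) = (\<Sum>k\<in>{1..N}. n div p^k)"
  using n
proof (induction n)
  case 0
  then show ?case by simp
next
  case (Suc n)
  have pk: "\<And>k. 0 < p ^ k" using p prime_gt_0_nat by simp
  have "multiplicity p (fact (Suc n) :: nat) = multiplicity p (Suc n * fact n)" by simp
  also have "\<dots> = multiplicity p (Suc n) + multiplicity p (fact n :: nat)"
    by (rule prime_elem_multiplicity_mult_distrib) (use p in auto)
  also have "multiplicity p (Suc n) = card {k\<in>{1..N}. p^k dvd Suc n}"
    by (rule mult_card) (use p Suc.prems in auto)
  also have "\<dots> = (\<Sum>k\<in>{1..N}. (if p^k dvd Suc n then 1 else 0))"
    by (simp add: sum_ind_card)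
  also have "multiplicity p (fact n :: nat) = (\<Sum>k\<in>{1..N}. n div p^k)"
    using Suc by simp
  also have "(\<Sum>k\<in>{1..N}. (if p^k dvd Suc n then 1 else 0)) + (\<Sum>k\<in>{1..N}. n div p^k)
      = (\<Sum>k\<in>{1..N}. Suc n div p^k)"
    by (subst sum.distrib[symmetric]) (rule sum.cong, simp_all add: div_Suc_ind[OF pk])
  finally show ?case .
qed

lemma div_add_ind: "0 < (q::nat) \<Longrightarrow> (a + b) div q = a div q + b div q + (if (a+b) mod q < a mod q then 1 else 0)"
proof -
  assume q: "0 < q"
  have "(a + b) div q = a div q + b div q + (a mod q + b mod q) div q" by (rule div_add1_eq)
  moreover have "(a mod q + b mod q) div q = (if (a+b) mod q < a mod q then 1 else 0)"
  proof -
    have A: "a mod q < q" "b mod q < q" using q by auto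
    have B: "(a+b) mod q = (a mod q + b mod q) mod q" by (simp add: mod_add_eq)
    show ?thesis
    proof (cases "a mod q + b mod q < q")
      case True
      then show ?thesis using B by simp
    next
      case False
      then have "(a mod q + b mod q) mod q = a mod q + b mod q - q"
      proof -
        have "a mod q + b mod q - q < q" using A by linarith
        hence "(a mod q + b mod q - q) mod q = a mod q + b mod q - q" by simp
        moreover have "(a mod q + b mod q) mod q = (a mod q + b mod q - q) mod q"
          by (rule le_mod_geq) (use False in linarith)
        ultimately show ?thesis by simp
      qed
      moreover have "(a mod q + b mod q) div q = 1"
      proof -
        have "a mod q + b mod q - q < q" using A by linarith
        hence "(a mod q + b mod q - q) div q = 0" by simp
        moreover have "(a mod q + b mod q) div q = Suc ((a mod q + b mod q - q) div q)"
          by (rule le_div_geq) (use False q in linarith)+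
        ultimately show ?thesis by simp
      qed
      ultimately show ?thesis using B A False by simp
    qed
  qed
  ultimately show ?thesis by simp
qed

definition KK :: "nat \<Rightarrow> nat \<Rightarrow> nat \<Rightarrow> nat \<Rightarrow> nat set" where
  "KK p N m n = {k\<in>{1..N}. m mod p^k < n mod p^k}"

lemma mult_choose:
  fixes p n m N :: nat
  assumes p: "prime p" and nm: "n \<le> m" and mN: "m \<le> N"
  shows "multiplicity p (m choose n) = card (KK p N m n)"
proof -
  have pk: "\<And>k. 0 < p ^ k" using p prime_gt_0_nat by simp
  have eq: "fact n * fact (m - n) * (m choose n) = (fact m :: nat)" by (rule binomial_fact_lemma[OF nm])
  have nz: "(fact n :: nat) \<noteq> 0" "(fact (m-n) :: nat) \<noteq> 0" "m choose n \<noteq> 0" using nm by auto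
  have "multiplicity p (fact m :: nat) = multiplicity p (fact n :: nat) + multiplicity p (fact (m-n) :: nat) + multiplicity p (m choose n)"
  proof -
    have pe: "prime_elem p" using p by simp
    have "multiplicity p (fact n * fact (m - n) * (m choose n) :: nat) = multiplicity p (fact n * fact (m - n) :: nat) + multiplicity p (m choose n)"
      by (rule prime_elem_multiplicity_mult_distrib[OF pe]) (use nz in auto)
    also have "multiplicity p (fact n * fact (m - n) :: nat) = multiplicity p (fact n :: nat) + multiplicity p (fact (m-n) :: nat)"
      by (rule prime_elem_multiplicity_mult_distrib[OF pe]) (use nz in auto)
    finally show ?thesis unfolding eq .
  qed
  moreover have "multiplicity p (fact m :: nat) = (\<Sum>k\<in>{1..N}. m div p^k)" by (rule mult_fact[OF p mN])
  moreover have "multiplicity p (fact n :: nat) = (\<Sum>k\<in>{1..N}. n div p^k)" by (rule mult_fact) (use p nm mN in auto)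
  moreover have "multiplicity p (fact (m-n) :: nat) = (\<Sum>k\<in>{1..N}. (m-n) div p^k)" by (rule mult_fact) (use p nm mN in auto)
  moreover have "(\<Sum>k\<in>{1..N}. m div p^k) = (\<Sum>k\<in>{1..N}. n div p^k) + (\<Sum>k\<in>{1..N}. (m-n) div p^k) + card (KK p N m n)"
  proof -
    have "\<And>k. m div p^k = n div p^k + (m-n) div p^k + (if m mod p^k < n mod p^k then 1 else 0)"
      using div_add_ind[OF pk, of n "m-n"] nm by simp
    hence "(\<Sum>k\<in>{1..N}. m div p^k) = (\<Sum>k\<in>{1..N}. n div p^k + (m-n) div p^k + (if m mod p^k < n mod p^k then 1 else 0))"
      by simp
    also have "\<dots> = (\<Sum>k\<in>{1..N}. n div p^k) + (\<Sum>k\<in>{1..N}. (m-n) div p^k) + card (KK p N m n)"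
      by (simp add: sum.distrib sum_ind_card KK_def)
    finally show ?thesis .
  qed
  ultimately show ?thesis by linarith
qed



lemma ibinom_nat: "ibinom (int m) (int n) = int (m choose n)"
proof -
  have "real_of_int (\<Prod>j<n. (int m - int j)) = (\<Prod>j\<in>{0..<n}. (real m - of_nat j))"
    by (simp add: atLeast0LessThan)
  also have "\<dots> = (real m gchoose n) * fact n" by (rule gbinomial_mult_fact'[symmetric])
  also have "\<dots> = real (m choose n) * fact n" by (simp add: binomial_gbinomial)
  finally have "(\<Prod>j<n. (int m - int j)) = int (m choose n) * fact n"
    by (metis of_int_eq_iff of_int_fact of_int_mult of_int_of_nat_eq)
  thus ?thesis unfolding ibinom_def by simp
qed

lemma mult_int_nat:
  fixes p x :: nat
  assumes p: "prime p" and x: "x \<noteq> 0"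
  shows "multiplicity (int p) (int x) = multiplicity p x"
proof -
  define j where "j = multiplicity p x"
  have nu: "\<not> is_unit p" using p not_prime_unit by blast
  have "p ^ j dvd x" unfolding j_def by (rule multiplicity_dvd)
  moreover have "\<not> p ^ Suc j dvd x"
    unfolding j_def by (subst power_dvd_iff_le_multiplicity) (use x nu in auto)
  ultimately have "int p ^ j dvd int x" "\<not> int p ^ Suc j dvd int x"
    by (metis of_nat_dvd_iff of_nat_power)+
  thus ?thesis unfolding j_def by (rule multiplicity_eqI)
qed

lemma vp_mult:
  assumes p: "prime p"
  shows "vp p (x * y) = vp p x + vp p y"
proof -
  have pe: "prime_elem (int p)" using p by simp
  show ?thesis
    by (cases "x = 0"; cases "y = 0")
       (auto simp: vp_def prime_elem_multiplicity_mult_distrib[OF pe])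
qed

lemma vp_choose:
  assumes p: "prime p" and nm: "n \<le> m" and mN: "m \<le> N"
  shows "vp p (ibinom (int m) (int n)) = enat (card (KK p N m n))"
proof -
  have "m choose n \<noteq> 0" using nm by simp
  thus ?thesis
    by (simp add: vp_def ibinom_nat mult_int_nat[OF p] mult_choose[OF p nm mN])
qed

lemma vp_choose0:
  assumes "m < n"
  shows "vp p (ibinom (int m) (int n)) = \<infinity>"
  using assms by (simp add: vp_def ibinom_nat)


lemma mod3_shift: "0 < (Q::nat) \<Longrightarrow> c < 3 \<Longrightarrow> (3*d + c) mod (3*Q) = 3*(d mod Q) + c"
proof -
  assume Q: "0 < Q" and c: "c < 3"
  have "3*d + c = 3*(Q*(d div Q) + d mod Q) + c" by (simp only: mult_div_mod_eq)
  also have "\<dots> = (3*Q) * (d div Q) + (3*(d mod Q) + c)" by (simp only: add_mult_distrib2 mult.assoc add.assoc)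
  finally have eq: "3*d + c = (3*Q) * (d div Q) + (3*(d mod Q) + c)" .
  have lt:  "3*(d mod Q) + c < 3*Q"
  proof -
    have "d mod Q < Q" using Q by simp
    hence "d mod Q + 1 \<le> Q" by simp
    thus ?thesis using c by linarith
  qed
  have "(3*d + c) mod (3*Q) = ((3*Q) * (d div Q) + (3*(d mod Q) + c)) mod (3*Q)"
    by (simp only: eq[symmetric])
  also have "\<dots> = (3*(d mod Q) + c) mod (3*Q)" by simp
  also have "\<dots> = 3*(d mod Q) + c" using lt by (rule mod_less)
  finally show ?thesis .
qed

lemma D3_prop:
  assumes "d \<in> D3" and "1 \<le> k"
  shows "3*(d mod 3^k) + 3 \<le> 3^k \<or> 3*(d mod 3^k) \<ge> 2*3^k"
  using assms
proof (induction d arbitrary: k rule: D3.induct)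
  case D3_zero
  then show ?case by (cases k) auto
next
  case (D3_mult d)
  then obtain j where k: "k = Suc j" by (cases k) auto
  show ?case
  proof (cases "j = 0")
    case True
    then show ?thesis using k by simp
  next
    case False
    have "(3*d + 0) mod (3*3^j) = 3*(d mod 3^j) + 0" by (rule mod3_shift) auto
    hence e: "(3*d) mod 3^k = 3*(d mod 3^j)" unfolding k power_Suc by simp
    from D3_mult.IH[of j] False show ?thesis unfolding e unfolding k power_Suc by auto
  qed
next
  case (D3_plus2 d)
  then obtain j where k: "k = Suc j" by (cases k) auto
  show ?case
  proof (cases "j = 0")
    case True
    have "(3*d+2) mod 3 = (2::nat)" by presburger
    then show ?thesis using k True by simp
  next
    case False
    have "(3*d + 2) mod (3*3^j) = 3*(d mod 3^j) + 2" by (rule mod3_shift) auto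
    hence e: "(3*d+2) mod 3^k = 3*(d mod 3^j) + 2" unfolding k power_Suc .
    from D3_plus2.IH[of j] False show ?thesis unfolding e unfolding k power_Suc by auto
  qed
qed

lemma pip_bound: "p \<ge> 1 \<Longrightarrow> 3 * pip p \<le> int p - 1"
  unfolding pip_def by linarith

lemma Dgen_prop:
  assumes "d \<in> Dgen p" and p: "p \<ge> 1"
  shows "\<exists>u::int. int d mod (int p ^ k) = u mod (int p ^ k) \<and> 3 * \<bar>u\<bar> \<le> int p ^ k - 1"
  using assms(1)
proof (induction d arbitrary: k rule: Dgen.induct)
  case (Dgen_base d)
  show ?case
  proof (cases k)
    case 0
    then show ?thesis by (intro exI[of _ 0]) simp
  next
    case (Suc j)
    have "p \<le> p ^ k" using p Suc by (simp add: self_le_power)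
    hence "int p \<le> int p ^ k" by (metis of_nat_le_iff of_nat_power)
    moreover have "3 * int d \<le> int p - 1" using Dgen_base pip_bound[OF p] by linarith
    moreover have "\<bar>int d\<bar> = int d" by simp
    ultimately have "3 * \<bar>int d\<bar> \<le> int p ^ k - 1" by linarith
    thus ?thesis by blast
  qed
next
  case (Dgen_step d e)
  show ?case
  proof (cases k)
    case 0
    then show ?thesis by (intro exI[of _ 0]) simp
  next
    case (Suc j)
    obtain u where u: "int d mod (int p ^ j) = u mod (int p ^ j)" "3 * \<bar>u\<bar> \<le> int p ^ j - 1"
      using Dgen_step.IH by blast
    define t where "t = int e - int p * int d"
    have "\<bar>t\<bar> \<le> pip p" unfolding t_def abs_le_iff using Dgen_step.hyps by linarith
    hence t: "3 * \<bar>t\<bar> \<le> int p - 1" using pip_bound[OF p] by linarith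
    have c: "int e mod (int p ^ k) = (int p * u + t) mod (int p ^ k)"
    proof -
      have "(int p * int d) mod (int p * int p ^ j) = (int p * u) mod (int p * int p ^ j)"
        using u(1) by (simp add: mod_mult_mult1)
      hence "(int p * int d) mod (int p ^ k) = (int p * u) mod (int p ^ k)"
        using Suc by simp
      hence "(int p * int d + t) mod (int p ^ k) = (int p * u + t) mod (int p ^ k)"
        by (metis mod_add_left_eq)
      thus ?thesis unfolding t_def by simp
    qed
    have a1: "\<bar>int p * u + t\<bar> \<le> \<bar>int p * u\<bar> + \<bar>t\<bar>" by (rule abs_triangle_ineq)
    have a2: "\<bar>int p * u\<bar> = int p * \<bar>u\<bar>" by (simp add: abs_mult)
    have a3: "int p * (3*\<bar>u\<bar>) = 3 * (int p * \<bar>u\<bar>)" by simp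
    have "3 * \<bar>int p * u + t\<bar> \<le> int p * (3*\<bar>u\<bar>) + 3*\<bar>t\<bar>" using a1 a2 a3 by linarith
    also have "\<dots> \<le> int p * (int p ^ j - 1) + (int p - 1)"
      using u(2) t by (intro add_mono mult_left_mono) auto
    also have "\<dots> = int p ^ k - 1" using Suc by (simp add: algebra_simps)
    finally show ?thesis using c by blast
  qed
qed

lemma Dgen_res:
  assumes "d \<in> Dgen p" and p: "p \<ge> 1"
  shows "3*(d mod p^k) + 1 \<le> p^k \<or> 3*(d mod p^k) \<ge> 2*p^k + 1"
proof -
  obtain u where u: "int d mod (int p ^ k) = u mod (int p ^ k)" "3 * \<bar>u\<bar> \<le> int p ^ k - 1"
    using Dgen_prop[OF assms] by blast
  define Q where "Q = p^k"
  define r where "r = d mod Q"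
  have qq: "int p ^ k = int Q" unfolding Q_def by simp
  have rr: "int d mod int Q = int r" unfolding r_def by (simp add: of_nat_mod)
  have q: "0 < Q" using p unfolding Q_def by simp
  have ru: "int r = u mod int Q" using u(1) rr qq by simp
  have ub: "3 * \<bar>u\<bar> \<le> int Q - 1" using u(2) qq by simp
  have "3*r + 1 \<le> Q \<or> 3*r \<ge> 2*Q + 1"
  proof (cases "u \<ge> 0")
    case True
    have "u < int Q" using ub True by linarith
    hence "u mod int Q = u" using True by (intro mod_pos_pos_trivial)
    hence "3 * int r + 1 \<le> int Q" using ru ub True by linarith
    thus ?thesis by linarith
  next
    case False
    have "u mod int Q = (u + int Q) mod int Q" by simp
    also have "\<dots> = u + int Q" using ub False by (intro mod_pos_pos_trivial) linarith+
    finally have "3 * int r \<ge> 2 * int Q + 1" using ru ub False by linarith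
    thus ?thesis by linarith
  qed
  thus ?thesis unfolding r_def Q_def .
qed

lemma mod_shift_c: "0 < (q::int) \<Longrightarrow> c*q \<le> x \<Longrightarrow> x < c*q + q \<Longrightarrow> x mod q = x - c*q"
proof -
  assume q: "0 < q" and a: "c*q \<le> x" "x < c*q + q"
  have "x mod q = (x - c*q) mod q" by (simp add: mod_diff_eq[symmetric])
  also have "\<dots> = x - c*q" using a by (intro mod_pos_pos_trivial) linarith+
  finally show ?thesis .
qed

lemma mc:
  fixes q x :: int
  assumes q: "0 < q" and lo: "-2*q \<le> x" and hi: "x < 3*q"
  shows "0 \<le> x mod q \<and> x mod q < q \<and>
    (x mod q = x + 2*q \<or> x mod q = x + q \<or> x mod q = x \<or> x mod q = x - q \<or> x mod q = x - 2*q)"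
proof -
  have b: "0 \<le> x mod q" "x mod q < q" using q by simp_all
  consider "x < -q" | "-q \<le> x \<and> x < 0" | "0 \<le> x \<and> x < q" | "q \<le> x \<and> x < 2*q" | "2*q \<le> x" by linarith
  then have "x mod q = x + 2*q \<or> x mod q = x + q \<or> x mod q = x \<or> x mod q = x - q \<or> x mod q = x - 2*q"
  proof cases
    case 1 then show ?thesis using mod_shift_c[OF q, of "-2" x] lo by simp
  next
    case 2 then show ?thesis using mod_shift_c[OF q, of "-1" x] by simp
  next
    case 3 then show ?thesis using mod_shift_c[OF q, of "0" x] by simp
  next
    case 4 then show ?thesis using mod_shift_c[OF q, of "1" x] by simp
  next
    case 5 then show ?thesis using mod_shift_c[OF q, of "2" x] hi by simp
  qed
  with b show ?thesis by blast
qed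

lemma k_a:
  fixes q r :: int
  assumes q: "0 < q" and r: "0 \<le> r" "r < q" and W: "3*r + 1 \<le> q \<or> 3*r \<ge> 2*q"
  shows "(2*r) mod q < r \<longleftrightarrow> (3*r) mod q < r"
proof -
  have A: "0 \<le> (2*r) mod q \<and> (2*r) mod q < q \<and> ((2*r) mod q = 2*r + 2*q \<or> (2*r) mod q = 2*r + q \<or> (2*r) mod q = 2*r \<or> (2*r) mod q = 2*r - q \<or> (2*r) mod q = 2*r - 2*q)"
    by (rule mc) (use q r in linarith)+
  have B: "0 \<le> (3*r) mod q \<and> (3*r) mod q < q \<and> ((3*r) mod q = 3*r + 2*q \<or> (3*r) mod q = 3*r + q \<or> (3*r) mod q = 3*r \<or> (3*r) mod q = 3*r - q \<or> (3*r) mod q = 3*r - 2*q)"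
    by (rule mc) (use q r in linarith)+
  from A B W r show ?thesis by (elim conjE disjE) linarith+
qed

lemma k_b:
  fixes q r s :: int
  assumes q: "0 < q" and r: "0 \<le> r" "r < q" and s: "0 \<le> s" "s < q" and W: "3*r + 3 \<le> q \<or> 3*r \<ge> 2*q"
    and pr: "True"
  shows "(2*r+1) mod q < r \<longleftrightarrow> (3*r+2) mod q < r"
proof -
  have F0: "0 \<le> (2*r+1) mod q \<and> (2*r+1) mod q < q \<and> ((2*r+1) mod q = 2*r+1 + 2*q \<or> (2*r+1) mod q = 2*r+1 + q \<or> (2*r+1) mod q = 2*r+1 \<or> (2*r+1) mod q = 2*r+1 - q \<or> (2*r+1) mod q = 2*r+1 - 2*q)"
    by (rule mc) (use q r s in linarith)+
  have F1: "0 \<le> (3*r+2) mod q \<and> (3*r+2) mod q < q \<and> ((3*r+2) mod q = 3*r+2 + 2*q \<or> (3*r+2) mod q = 3*r+2 + q \<or> (3*r+2) mod q = 3*r+2 \<or> (3*r+2) mod q = 3*r+2 - q \<or> (3*r+2) mod q = 3*r+2 - 2*q)"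
    by (rule mc) (use q r s in linarith)+
  from F0 F1 W r s pr show ?thesis by (elim conjE disjE) linarith+
qed

lemma k_c:
  fixes q r s :: int
  assumes q: "0 < q" and r: "0 \<le> r" "r < q" and s: "0 \<le> s" "s < q" and W: "3*r + 1 \<le> q \<or> 3*r \<ge> 2*q"
    and pr: "(2*r) mod q < r"
  shows "s < r \<or> (3*r - s) mod q < r"
proof -
  have F0: "0 \<le> (2*r) mod q \<and> (2*r) mod q < q \<and> ((2*r) mod q = 2*r + 2*q \<or> (2*r) mod q = 2*r + q \<or> (2*r) mod q = 2*r \<or> (2*r) mod q = 2*r - q \<or> (2*r) mod q = 2*r - 2*q)"
    by (rule mc) (use q r s in linarith)+
  have F1: "0 \<le> (3*r - s) mod q \<and> (3*r - s) mod q < q \<and> ((3*r - s) mod q = 3*r - s + 2*q \<or> (3*r - s) mod q = 3*r - s + q \<or> (3*r - s) mod q = 3*r - s \<or> (3*r - s) mod q = 3*r - s - q \<or> (3*r - s) mod q = 3*r - s - 2*q)"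
    by (rule mc) (use q r s in linarith)+
  from F0 F1 W r s pr show ?thesis by (elim conjE disjE) linarith+
qed

lemma k_d:
  fixes q r s :: int
  assumes q: "0 < q" and r: "0 \<le> r" "r < q" and s: "0 \<le> s" "s < q" and W: "3*r + 1 \<le> q \<or> 3*r \<ge> 2*q"
    and pr: "(2*r) mod q < r"
  shows "s < r \<or> (3*r - 1 - s) mod q < r"
proof -
  have F0: "0 \<le> (2*r) mod q \<and> (2*r) mod q < q \<and> ((2*r) mod q = 2*r + 2*q \<or> (2*r) mod q = 2*r + q \<or> (2*r) mod q = 2*r \<or> (2*r) mod q = 2*r - q \<or> (2*r) mod q = 2*r - 2*q)"
    by (rule mc) (use q r s in linarith)+
  have F1: "0 \<le> (3*r - 1 - s) mod q \<and> (3*r - 1 - s) mod q < q \<and> ((3*r - 1 - s) mod q = 3*r - 1 - s + 2*q \<or> (3*r - 1 - s) mod q = 3*r - 1 - s + q \<or> (3*r - 1 - s) mod q = 3*r - 1 - s \<or> (3*r - 1 - s) mod q = 3*r - 1 - s - q \<or> (3*r - 1 - s) mod q = 3*r - 1 - s - 2*q)"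
    by (rule mc) (use q r s in linarith)+
  from F0 F1 W r s pr show ?thesis by (elim conjE disjE) linarith+
qed

lemma k_e:
  fixes q r s :: int
  assumes q: "0 < q" and r: "0 \<le> r" "r < q" and s: "0 \<le> s" "s < q" and W: "3*r + 3 \<le> q \<or> 3*r \<ge> 2*q"
    and pr: "(2*r+1) mod q < r"
  shows "s < r \<or> (3*r + 1 - s) mod q < (r+1) mod q"
proof -
  have F0: "0 \<le> (2*r+1) mod q \<and> (2*r+1) mod q < q \<and> ((2*r+1) mod q = 2*r+1 + 2*q \<or> (2*r+1) mod q = 2*r+1 + q \<or> (2*r+1) mod q = 2*r+1 \<or> (2*r+1) mod q = 2*r+1 - q \<or> (2*r+1) mod q = 2*r+1 - 2*q)"
    by (rule mc) (use q r s in linarith)+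
  have F1: "0 \<le> (3*r + 1 - s) mod q \<and> (3*r + 1 - s) mod q < q \<and> ((3*r + 1 - s) mod q = 3*r + 1 - s + 2*q \<or> (3*r + 1 - s) mod q = 3*r + 1 - s + q \<or> (3*r + 1 - s) mod q = 3*r + 1 - s \<or> (3*r + 1 - s) mod q = 3*r + 1 - s - q \<or> (3*r + 1 - s) mod q = 3*r + 1 - s - 2*q)"
    by (rule mc) (use q r s in linarith)+
  have F2: "0 \<le> (r+1) mod q \<and> (r+1) mod q < q \<and> ((r+1) mod q = r+1 + 2*q \<or> (r+1) mod q = r+1 + q \<or> (r+1) mod q = r+1 \<or> (r+1) mod q = r+1 - q \<or> (r+1) mod q = r+1 - 2*q)"
    by (rule mc) (use q r s in linarith)+
  from F0 F1 F2 W r s pr show ?thesis by (elim conjE disjE) linarith+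
qed

lemma k_f:
  fixes q r s :: int
  assumes q: "0 < q" and r: "0 \<le> r" "r < q" and s: "0 \<le> s" "s < q" and W: "3*r + 1 \<le> q \<or> 3*r \<ge> 2*q + 1"
    and pr: "(2*r) mod q < r"
  shows "s < (r - 1) mod q \<or> (3*r - 2 - s) mod q < r"
proof -
  have F0: "0 \<le> (2*r) mod q \<and> (2*r) mod q < q \<and> ((2*r) mod q = 2*r + 2*q \<or> (2*r) mod q = 2*r + q \<or> (2*r) mod q = 2*r \<or> (2*r) mod q = 2*r - q \<or> (2*r) mod q = 2*r - 2*q)"
    by (rule mc) (use q r s in linarith)+
  have F1: "0 \<le> (3*r - 2 - s) mod q \<and> (3*r - 2 - s) mod q < q \<and> ((3*r - 2 - s) mod q = 3*r - 2 - s + 2*q \<or> (3*r - 2 - s) mod q = 3*r - 2 - s + q \<or> (3*r - 2 - s) mod q = 3*r - 2 - s \<or> (3*r - 2 - s) mod q = 3*r - 2 - s - q \<or> (3*r - 2 - s) mod q = 3*r - 2 - s - 2*q)"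
    by (rule mc) (use q r s in linarith)+
  have F2: "0 \<le> (r - 1) mod q \<and> (r - 1) mod q < q \<and> ((r - 1) mod q = r - 1 + 2*q \<or> (r - 1) mod q = r - 1 + q \<or> (r - 1) mod q = r - 1 \<or> (r - 1) mod q = r - 1 - q \<or> (r - 1) mod q = r - 1 - 2*q)"
    by (rule mc) (use q r s in linarith)+
  from F0 F1 F2 W r s pr show ?thesis by (elim conjE disjE) linarith+
qed

lemma modlin: "(a * (x mod Q) + b * (y mod Q) + c) mod Q = (a * x + b * y + c) mod (Q::int)"
proof -
  have d1: "Q dvd (x mod Q - x)" using mod_eq_dvd_iff[of "x mod Q" Q x] by simp
  have d2: "Q dvd (y mod Q - y)" using mod_eq_dvd_iff[of "y mod Q" Q y] by simp
  have "(a * (x mod Q) + b * (y mod Q) + c) - (a * x + b * y + c) = a * (x mod Q - x) + b * (y mod Q - y)"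
    by (simp add: algebra_simps)
  hence "Q dvd (a * (x mod Q) + b * (y mod Q) + c) - (a * x + b * y + c)"
    using d1 d2 by (simp add: dvd_add dvd_mult)
  thus ?thesis by (simp add: mod_eq_dvd_iff)
qed
lemma ml1: "(3 * (x mod Q) - y mod Q) mod Q = (3*x - y) mod (Q::int)"
  using modlin[of 3 x Q "-1" y 0] by simp
lemma ml2: "(3 * (x mod Q) - 1 - y mod Q) mod Q = (3*x - 1 - y) mod (Q::int)"
  using modlin[of 3 x Q "-1" y "-1"] by (simp add: algebra_simps)
lemma ml3: "(3 * (x mod Q) + 1 - y mod Q) mod Q = (3*x + 1 - y) mod (Q::int)"
  using modlin[of 3 x Q "-1" y 1] by (simp add: algebra_simps)
lemma ml4: "((x mod Q) + 1) mod Q = (x + 1) mod (Q::int)"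
  using modlin[of 1 x Q 0 y 1] by simp
lemma ml5: "(2*(x mod Q) + 1) mod Q = (2*x + 1) mod (Q::int)"
  using modlin[of 2 x Q 0 y 1] by simp
lemma ml6: "(3 * (x mod Q) - 2 - y mod Q) mod Q = (3*x - 2 - y) mod (Q::int)"
  using modlin[of 3 x Q "-1" y "-2"] by (simp add: algebra_simps)
lemma ml7: "(2*(x mod Q)) mod Q = (2*x) mod (Q::int)"
  using modlin[of 2 x Q 0 y 0] by simp
lemma ml8: "(3*(x mod Q)) mod Q = (3*x) mod (Q::int)"
  using modlin[of 3 x Q 0 y 0] by simp
lemma ml9: "(3*(x mod Q) + 2) mod Q = (3*x + 2) mod (Q::int)"
  using modlin[of 3 x Q 0 y 2] by simp
lemma ml10: "((x mod Q) - 1) mod Q = (x - 1) mod (Q::int)"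
  using modlin[of 1 x Q 0 y "-1"] by simp


lemma KK_sub:
  assumes "\<And>k. k \<in> {1..N} \<Longrightarrow> m0 mod p^k < n0 mod p^k \<Longrightarrow> m1 mod p^k < n1 mod p^k \<or> m2 mod p^k < n2 mod p^k"
  shows "card (KK p N m0 n0) \<le> card (KK p N m1 n1) + card (KK p N m2 n2)"
proof -
  have "KK p N m0 n0 \<subseteq> KK p N m1 n1 \<union> KK p N m2 n2"
    using assms unfolding KK_def by blast
  hence "card (KK p N m0 n0) \<le> card (KK p N m1 n1 \<union> KK p N m2 n2)"
    by (intro card_mono) (auto simp: KK_def)
  also have "\<dots> \<le> card (KK p N m1 n1) + card (KK p N m2 n2)" by (rule card_Un_le)
  finally show ?thesis .
qed

lemma KK_eq:
  assumes "\<And>k. k \<in> {1..N} \<Longrightarrow> m0 mod p^k < n0 mod p^k \<longleftrightarrow> m1 mod p^k < n1 mod p^k"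
  shows "KK p N m0 n0 = KK p N m1 n1"
  using assms unfolding KK_def by blast

lemma modlt: "((m::nat) mod q < n mod q) \<longleftrightarrow> (int m mod int q < int n mod int q)"
  by (simp only: zmod_int[symmetric] of_nat_less_iff)

lemma Wint: "3*(x::nat) + c \<le> y \<or> 3*x \<ge> 2*y + e \<Longrightarrow> 3*int x + int c \<le> int y \<or> 3*int x \<ge> 2*int y + int e"
  by linarith

lemma part_c:
  assumes p: "prime p"
    and dp: "\<And>k. 1 \<le> k \<Longrightarrow> 3*(d mod p^k) + 1 \<le> p^k \<or> 3*(d mod p^k) \<ge> 2*p^k + 0"
    and a: "0 \<le> a" "a \<le> 2*int d"
  shows "vp p (ibinom a (int d) * ibinom (3*int d - a) (int d)) \<ge> vp p (ibinom (2*int d) (int d))"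
proof -
  define N where "N = 3*d + 3"
  obtain A where A: "a = int A" using a by (metis nonneg_int_cases)
  have A2: "A \<le> 2*d" using a A by linarith
  have e1: "2*int d = int (2*d)" by simp
  have e2: "3*int d - int A = int (3*d - A)" using A A2 by simp
  have v0: "vp p (ibinom (2*int d) (int d)) = enat (card (KK p N (2*d) d))"
    unfolding e1 by (rule vp_choose[OF p]) (auto simp: N_def)
  show ?thesis
  proof (cases "A < d")
    case True
    then show ?thesis unfolding vp_mult[OF p] A e2 vp_choose0[OF True] by simp
  next
    case False
    have v1: "vp p (ibinom (int A) (int d)) = enat (card (KK p N A d))"
      by (rule vp_choose[OF p]) (use False A2 in \<open>auto simp: N_def\<close>)
    have v2: "vp p (ibinom (int (3*d - A)) (int d)) = enat (card (KK p N (3*d - A) d))"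
      by (rule vp_choose[OF p]) (use False A2 in \<open>auto simp: N_def\<close>)
    have "card (KK p N (2*d) d) \<le> card (KK p N A d) + card (KK p N (3*d - A) d)"
    proof (rule KK_sub)
      fix k assume k: "k \<in> {1..N}" and h: "2*d mod p^k < d mod p^k"
      define Q where "Q = int (p^k)"
      define r where "r = int d mod Q"
      define s where "s = int A mod Q"
      have Q: "0 < Q" using p unfolding Q_def by (simp add: prime_gt_0_nat)
      have r: "0 \<le> r" "r < Q" unfolding r_def using Q by simp_all
      have s: "0 \<le> s" "s < Q" unfolding s_def using Q by simp_all
      have rd: "int (d mod p^k) = r" unfolding r_def Q_def by (simp only: zmod_int)
      have W: "3*r + 1 \<le> Q \<or> 3*r \<ge> 2*Q"
        using Wint[OF dp[of k]] k unfolding rd[symmetric] Q_def by simp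
      have i2: "int (2*d) = 2*int d" by simp
      have E2: "(2*r) mod Q = (2*int d) mod Q" unfolding r_def by (rule ml7)
      have hh: "int (2*d) mod Q < r" using h unfolding modlt Q_def[symmetric] r_def[symmetric] .
      have h2: "(2*r) mod Q < r" unfolding E2 using hh unfolding i2 .
      have E: "(3*r - s) mod Q = (3*int d - int A) mod Q" unfolding r_def s_def by (rule ml1)
      have i3: "int (3*d - A) = 3*int d - int A" using A2 by simp
      from k_c[OF Q r s W h2]
      have "s < r \<or> (3*int d - int A) mod Q < r" unfolding E .
      thus "A mod p^k < d mod p^k \<or> (3*d - A) mod p^k < d mod p^k"
        unfolding modlt Q_def[symmetric] r_def[symmetric] s_def[symmetric] i3 .
    qed
    thus ?thesis unfolding vp_mult[OF p] A e2 v0 v1 v2 by simp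
  qed
qed

lemma part_a:
  assumes p: "prime p"
    and dp: "\<And>k. 1 \<le> k \<Longrightarrow> 3*(d mod p^k) + 1 \<le> p^k \<or> 3*(d mod p^k) \<ge> 2*p^k + 0"
  shows "vp p (ibinom (2*int d) (int d)) = vp p (ibinom (3*int d) (int d))"
proof -
  define N where "N = 3*d + 3"
  have e1: "2*int d = int (2*d)" "3*int d = int (3*d)" by simp_all
  have v0: "vp p (ibinom (2*int d) (int d)) = enat (card (KK p N (2*d) d))"
    unfolding e1 by (rule vp_choose[OF p]) (auto simp: N_def)
  have v1: "vp p (ibinom (3*int d) (int d)) = enat (card (KK p N (3*d) d))"
    unfolding e1 by (rule vp_choose[OF p]) (auto simp: N_def)
  have "KK p N (2*d) d = KK p N (3*d) d"
  proof (rule KK_eq)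
    fix k assume k: "k \<in> {1..N}"
    define Q where "Q = int (p^k)"
    define r where "r = int d mod Q"
    have Q: "0 < Q" using p unfolding Q_def by (simp add: prime_gt_0_nat)
    have r: "0 \<le> r" "r < Q" unfolding r_def using Q by simp_all
    have rd: "int (d mod p^k) = r" unfolding r_def Q_def by (simp only: zmod_int)
    have W: "3*r + 1 \<le> Q \<or> 3*r \<ge> 2*Q"
      using Wint[OF dp[of k]] k unfolding rd[symmetric] Q_def by simp
    have i2: "int (2*d) = 2*int d" "int (3*d) = 3*int d" by simp_all
    have E2: "(2*r) mod Q = (2*int d) mod Q" unfolding r_def by (rule ml7)
    have E3: "(3*r) mod Q = (3*int d) mod Q" unfolding r_def by (rule ml8)
    from k_a[OF Q r W] have "(2*int d) mod Q < r \<longleftrightarrow> (3*int d) mod Q < r" unfolding E2 E3 .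
    thus "2*d mod p^k < d mod p^k \<longleftrightarrow> 3*d mod p^k < d mod p^k"
      unfolding modlt Q_def[symmetric] r_def[symmetric] i2 .
  qed
  thus ?thesis unfolding v0 v1 by simp
qed

lemma part_b:
  assumes p: "prime p"
    and dp: "\<And>k. 1 \<le> k \<Longrightarrow> 3*(d mod p^k) + 3 \<le> p^k \<or> 3*(d mod p^k) \<ge> 2*p^k + 0"
  shows "vp p (ibinom (2*int d + 1) (int d)) = vp p (ibinom (3*int d + 2) (int d))"
proof -
  define N where "N = 3*d + 3"
  have e1: "2*int d + 1 = int (2*d + 1)" "3*int d + 2 = int (3*d + 2)" by simp_all
  have v0: "vp p (ibinom (2*int d + 1) (int d)) = enat (card (KK p N (2*d + 1) d))"
    unfolding e1 by (rule vp_choose[OF p]) (auto simp: N_def)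
  have v1: "vp p (ibinom (3*int d + 2) (int d)) = enat (card (KK p N (3*d + 2) d))"
    unfolding e1 by (rule vp_choose[OF p]) (auto simp: N_def)
  have "KK p N (2*d + 1) d = KK p N (3*d + 2) d"
  proof (rule KK_eq)
    fix k assume k: "k \<in> {1..N}"
    define Q where "Q = int (p^k)"
    define r where "r = int d mod Q"
    have Q: "0 < Q" using p unfolding Q_def by (simp add: prime_gt_0_nat)
    have r: "0 \<le> r" "r < Q" unfolding r_def using Q by simp_all
    have rd: "int (d mod p^k) = r" unfolding r_def Q_def by (simp only: zmod_int)
    have W: "3*r + 3 \<le> Q \<or> 3*r \<ge> 2*Q"
      using Wint[OF dp[of k]] k unfolding rd[symmetric] Q_def by simp
    have i2: "int (2*d + 1) = 2*int d + 1" "int (3*d + 2) = 3*int d + 2" by simp_all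
    have E2: "(2*r + 1) mod Q = (2*int d + 1) mod Q" unfolding r_def by (rule ml5)
    have E3: "(3*r + 2) mod Q = (3*int d + 2) mod Q" unfolding r_def by (rule ml9)
    from k_b[OF Q r r W TrueI] have "(2*int d + 1) mod Q < r \<longleftrightarrow> (3*int d + 2) mod Q < r" unfolding E2 E3 .
    thus "(2*d + 1) mod p^k < d mod p^k \<longleftrightarrow> (3*d + 2) mod p^k < d mod p^k"
      unfolding modlt Q_def[symmetric] r_def[symmetric] i2 .
  qed
  thus ?thesis unfolding v0 v1 by simp
qed

lemma part_d:
  assumes p: "prime p"
    and dp: "\<And>k. 1 \<le> k \<Longrightarrow> 3*(d mod p^k) + 1 \<le> p^k \<or> 3*(d mod p^k) \<ge> 2*p^k + 0"
    and a: "0 \<le> a" "a \<le> 2*int d"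
  shows "vp p (ibinom a (int d) * ibinom (3*int d - 1 - a) (int d)) \<ge> vp p (ibinom (2*int d) (int d))"
proof (cases "d = 0")
  case True
  then have "a = 0" using a by simp
  then show ?thesis using True by (simp add: ibinom_def vp_def)
next
  case d0: False
  define N where "N = 3*d + 3"
  obtain A where A: "a = int A" using a by (metis nonneg_int_cases)
  have A2: "A \<le> 2*d" using a A by linarith
  have e1: "2*int d = int (2*d)" by simp
  have e2: "3*int d - 1 - int A = int (3*d - 1 - A)" using A2 d0 by simp
  have v0: "vp p (ibinom (2*int d) (int d)) = enat (card (KK p N (2*d) d))"
    unfolding e1 by (rule vp_choose[OF p]) (auto simp: N_def)
  show ?thesis
  proof (cases "A < d \<or> 3*d - 1 - A < d")
    case True
    then show ?thesis
    proof
      assume h: "A < d"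
      show ?thesis unfolding vp_mult[OF p] A e2 vp_choose0[OF h] by simp
    next
      assume h: "3*d - 1 - A < d"
      show ?thesis unfolding vp_mult[OF p] A e2 vp_choose0[OF h] by simp
    qed
  next
    case False
    have v1: "vp p (ibinom (int A) (int d)) = enat (card (KK p N A d))"
      by (rule vp_choose[OF p]) (use False A2 in \<open>auto simp: N_def\<close>)
    have v2: "vp p (ibinom (int (3*d - 1 - A)) (int d)) = enat (card (KK p N (3*d - 1 - A) d))"
      by (rule vp_choose[OF p]) (use False A2 in \<open>auto simp: N_def\<close>)
    have "card (KK p N (2*d) d) \<le> card (KK p N A d) + card (KK p N (3*d - 1 - A) d)"
    proof (rule KK_sub)
      fix k assume k: "k \<in> {1..N}" and h: "2*d mod p^k < d mod p^k"
      define Q where "Q = int (p^k)"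
      define r where "r = int d mod Q"
      define s where "s = int A mod Q"
      have Q: "0 < Q" using p unfolding Q_def by (simp add: prime_gt_0_nat)
      have r: "0 \<le> r" "r < Q" unfolding r_def using Q by simp_all
      have s: "0 \<le> s" "s < Q" unfolding s_def using Q by simp_all
      have rd: "int (d mod p^k) = r" unfolding r_def Q_def by (simp only: zmod_int)
      have W: "3*r + 1 \<le> Q \<or> 3*r \<ge> 2*Q"
        using Wint[OF dp[of k]] k unfolding rd[symmetric] Q_def by simp
      have i2: "int (2*d) = 2*int d" by simp
      have E2: "(2*r) mod Q = (2*int d) mod Q" unfolding r_def by (rule ml7)
      have hh: "int (2*d) mod Q < r" using h unfolding modlt Q_def[symmetric] r_def[symmetric] .
      have h2: "(2*r) mod Q < r" unfolding E2 using hh unfolding i2 .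
      have E: "(3*r - 1 - s) mod Q = (3*int d - 1 - int A) mod Q" unfolding r_def s_def by (rule ml2)
      have i3: "int (3*d - 1 - A) = 3*int d - 1 - int A" using A2 d0 by simp
      from k_d[OF Q r s W h2]
      have "s < r \<or> (3*int d - 1 - int A) mod Q < r" unfolding E .
      thus "A mod p^k < d mod p^k \<or> (3*d - 1 - A) mod p^k < d mod p^k"
        unfolding modlt Q_def[symmetric] r_def[symmetric] s_def[symmetric] i3 .
    qed
    thus ?thesis unfolding vp_mult[OF p] A e2 v0 v1 v2 by simp
  qed
qed

lemma part_e:
  assumes p: "prime p"
    and dp: "\<And>k. 1 \<le> k \<Longrightarrow> 3*(d mod p^k) + 3 \<le> p^k \<or> 3*(d mod p^k) \<ge> 2*p^k + 0"
    and a: "0 \<le> a" "a \<le> 2*int d"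
  shows "vp p (ibinom a (int d) * ibinom (3*int d + 1 - a) (int d + 1)) \<ge> vp p (ibinom (2*int d + 1) (int d))"
proof -
  define N where "N = 3*d + 3"
  obtain A where A: "a = int A" using a by (metis nonneg_int_cases)
  have A2: "A \<le> 2*d" using a A by linarith
  have e1: "2*int d + 1 = int (2*d + 1)" by simp
  have e2: "3*int d + 1 - int A = int (3*d + 1 - A)" using A2 by simp
  have e3: "int d + 1 = int (d + 1)" by simp
  have v0: "vp p (ibinom (2*int d + 1) (int d)) = enat (card (KK p N (2*d + 1) d))"
    unfolding e1 by (rule vp_choose[OF p]) (auto simp: N_def)
  show ?thesis
  proof (cases "A < d")
    case True
    then show ?thesis unfolding vp_mult[OF p] A e2 vp_choose0[OF True] by simp
  next
    case False
    have v1: "vp p (ibinom (int A) (int d)) = enat (card (KK p N A d))"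
      by (rule vp_choose[OF p]) (use False A2 in \<open>auto simp: N_def\<close>)
    have v2: "vp p (ibinom (int (3*d + 1 - A)) (int (d + 1))) = enat (card (KK p N (3*d + 1 - A) (d + 1)))"
      by (rule vp_choose[OF p]) (use False A2 in \<open>auto simp: N_def\<close>)
    have "card (KK p N (2*d + 1) d) \<le> card (KK p N A d) + card (KK p N (3*d + 1 - A) (d + 1))"
    proof (rule KK_sub)
      fix k assume k: "k \<in> {1..N}" and h: "(2*d + 1) mod p^k < d mod p^k"
      define Q where "Q = int (p^k)"
      define r where "r = int d mod Q"
      define s where "s = int A mod Q"
      have Q: "0 < Q" using p unfolding Q_def by (simp add: prime_gt_0_nat)
      have r: "0 \<le> r" "r < Q" unfolding r_def using Q by simp_all
      have s: "0 \<le> s" "s < Q" unfolding s_def using Q by simp_all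
      have rd: "int (d mod p^k) = r" unfolding r_def Q_def by (simp only: zmod_int)
      have W: "3*r + 3 \<le> Q \<or> 3*r \<ge> 2*Q"
        using Wint[OF dp[of k]] k unfolding rd[symmetric] Q_def by simp
      have i2: "int (2*d + 1) = 2*int d + 1" by simp
      have E2: "(2*r + 1) mod Q = (2*int d + 1) mod Q" unfolding r_def by (rule ml5)
      have hh: "int (2*d + 1) mod Q < r" using h unfolding modlt Q_def[symmetric] r_def[symmetric] .
      have h2: "(2*r + 1) mod Q < r" unfolding E2 using hh unfolding i2 .
      have E: "(3*r + 1 - s) mod Q = (3*int d + 1 - int A) mod Q" unfolding r_def s_def by (rule ml3)
      have E4: "(r + 1) mod Q = (int d + 1) mod Q" unfolding r_def by (rule ml4)
      have i3: "int (3*d + 1 - A) = 3*int d + 1 - int A" using A2 by simp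
      have i4: "int (d + 1) = int d + 1" by simp
      from k_e[OF Q r s W h2]
      have "s < r \<or> (3*int d + 1 - int A) mod Q < (int d + 1) mod Q" unfolding E E4 .
      thus "A mod p^k < d mod p^k \<or> (3*d + 1 - A) mod p^k < (d + 1) mod p^k"
        unfolding modlt Q_def[symmetric] r_def[symmetric] s_def[symmetric] i3 i4 .
    qed
    thus ?thesis unfolding vp_mult[OF p] A e2 e3 v0 v1 v2 by simp
  qed
qed

lemma part_f:
  assumes p: "prime p" and p5: "p \<ge> 5"
    and dp: "\<And>k. 1 \<le> k \<Longrightarrow> 3*(d mod p^k) + 1 \<le> p^k \<or> 3*(d mod p^k) \<ge> 2*p^k + 1"
    and a: "0 \<le> a" "a \<le> 2*int d"
  shows "vp p (ibinom a (int d - 1) * ibinom (3*int d - 2 - a) (int d)) \<ge> vp p (ibinom (2*int d) (int d))"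
proof -
  obtain A where A: "a = int A" using a by (metis nonneg_int_cases)
  have A2: "A \<le> 2*d" using a A by linarith
  show ?thesis
  proof (cases "d = 0")
    case True
    then show ?thesis unfolding vp_mult[OF p] by (simp add: ibinom_def vp_def)
  next
    case d0: False
    show ?thesis
    proof (cases "d = 1 \<and> A = 2")
      case True
      have l: "ibinom a (int d - 1) * ibinom (3*int d - 2 - a) (int d) = -1"
        using True A by (simp add: ibinom_def)
      have r: "ibinom (2*int d) (int d) = 2"
        using True by (simp add: ibinom_def)
      have "\<not> int p dvd 2"
      proof
        assume "int p dvd 2"
        hence "p dvd 2" by (metis of_nat_dvd_iff of_nat_numeral)
        hence "p \<le> 2" by (simp add: dvd_imp_le)
        thus False using p5 by simp
      qed
      hence "multiplicity (int p) 2 = 0" by (rule not_dvd_imp_multiplicity_0)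
      moreover have "multiplicity (int p) (-1) = 0" by (rule multiplicity_unit_right) simp
      ultimately show ?thesis unfolding l r vp_def by simp
    next
      case False
      define N where "N = 3*d + 3"
      have B0: "A + 2 \<le> 3*d" using False d0 A2 by linarith
      have e1: "2*int d = int (2*d)" by simp
      have e2: "3*int d - 2 - int A = int (3*d - 2 - A)" using B0 by simp
      have e3: "int d - 1 = int (d - 1)" using d0 by simp
      have v0: "vp p (ibinom (2*int d) (int d)) = enat (card (KK p N (2*d) d))"
        unfolding e1 by (rule vp_choose[OF p]) (auto simp: N_def)
      show ?thesis
      proof (cases "A < d - 1 \<or> 3*d - 2 - A < d")
        case True
        then show ?thesis
        proof
          assume h: "A < d - 1"
          show ?thesis unfolding vp_mult[OF p] A e2 e3 vp_choose0[OF h] by simp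
        next
          assume h: "3*d - 2 - A < d"
          show ?thesis unfolding vp_mult[OF p] A e2 e3 vp_choose0[OF h] by simp
        qed
      next
        case False
        have v1: "vp p (ibinom (int A) (int (d - 1))) = enat (card (KK p N A (d - 1)))"
          by (rule vp_choose[OF p]) (use False A2 in \<open>auto simp: N_def\<close>)
        have v2: "vp p (ibinom (int (3*d - 2 - A)) (int d)) = enat (card (KK p N (3*d - 2 - A) d))"
          by (rule vp_choose[OF p]) (use False A2 in \<open>auto simp: N_def\<close>)
        have "card (KK p N (2*d) d) \<le> card (KK p N A (d - 1)) + card (KK p N (3*d - 2 - A) d)"
        proof (rule KK_sub)
          fix k assume k: "k \<in> {1..N}" and h: "2*d mod p^k < d mod p^k"
          define Q where "Q = int (p^k)"
          define r where "r = int d mod Q"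
          define s where "s = int A mod Q"
          have Q: "0 < Q" using p unfolding Q_def by (simp add: prime_gt_0_nat)
          have r: "0 \<le> r" "r < Q" unfolding r_def using Q by simp_all
          have s: "0 \<le> s" "s < Q" unfolding s_def using Q by simp_all
          have rd: "int (d mod p^k) = r" unfolding r_def Q_def by (simp only: zmod_int)
          have W: "3*r + 1 \<le> Q \<or> 3*r \<ge> 2*Q + 1"
            using Wint[OF dp[of k]] k unfolding rd[symmetric] Q_def by simp
          have i2: "int (2*d) = 2*int d" by simp
          have E2: "(2*r) mod Q = (2*int d) mod Q" unfolding r_def by (rule ml7)
          have hh: "int (2*d) mod Q < r" using h unfolding modlt Q_def[symmetric] r_def[symmetric] .
          have h2: "(2*r) mod Q < r" unfolding E2 using hh unfolding i2 .
          have E: "(3*r - 2 - s) mod Q = (3*int d - 2 - int A) mod Q" unfolding r_def s_def by (rule ml6)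
          have E4: "(r - 1) mod Q = (int d - 1) mod Q" unfolding r_def by (rule ml10)
          have i3: "int (3*d - 2 - A) = 3*int d - 2 - int A" using B0 by simp
          have i4: "int (d - 1) = int d - 1" using d0 by simp
          from k_f[OF Q r s W h2]
          have "s < (int d - 1) mod Q \<or> (3*int d - 2 - int A) mod Q < r" unfolding E E4 .
          thus "A mod p^k < (d - 1) mod p^k \<or> (3*d - 2 - A) mod p^k < d mod p^k"
            unfolding modlt Q_def[symmetric] r_def[symmetric] s_def[symmetric] i3 i4 .
        qed
        thus ?thesis unfolding vp_mult[OF p] A e2 e3 v0 v1 v2 by simp
      qed
    qed
  qed
qed

theorem theorem1p9:
  fixes p d :: nat
  assumes "prime p" and "p \<ge> 3" and "d \<in> Dp p"
  shows "(p = 3 \<longrightarrow>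
            vp 3 (ibinom (2*int d) (int d)) = vp 3 (ibinom (3*int d) (int d))
          \<and> vp 3 (ibinom (2*int d + 1) (int d)) = vp 3 (ibinom (3*int d + 2) (int d))
          \<and> (\<forall>a::int. 0 \<le> a \<and> a \<le> 2*int d \<longrightarrow>
                vp 3 (ibinom a (int d) * ibinom (3*int d - a) (int d)) \<ge> vp 3 (ibinom (2*int d) (int d))
              \<and> vp 3 (ibinom a (int d) * ibinom (3*int d - 1 - a) (int d)) \<ge> vp 3 (ibinom (2*int d) (int d))
              \<and> vp 3 (ibinom a (int d) * ibinom (3*int d + 1 - a) (int d + 1)) \<ge> vp 3 (ibinom (2*int d + 1) (int d))))
       \<and> (p \<ge> 5 \<longrightarrow>
            vp p (ibinom (2*int d) (int d)) = vp p (ibinom (3*int d) (int d))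
          \<and> (\<forall>a::int. 0 \<le> a \<and> a \<le> 2*int d \<longrightarrow>
                vp p (ibinom a (int d) * ibinom (3*int d - a) (int d)) \<ge> vp p (ibinom (2*int d) (int d))
              \<and> vp p (ibinom a (int d) * ibinom (3*int d - 1 - a) (int d)) \<ge> vp p (ibinom (2*int d) (int d))
              \<and> vp p (ibinom a (int d - 1) * ibinom (3*int d - 2 - a) (int d)) \<ge> vp p (ibinom (2*int d) (int d))))"
proof (intro conjI impI allI)
  assume p3: "p = 3"
  have p: "prime (3::nat)" by simp
  have dD: "d \<in> D3" using assms(3) p3 by (simp add: Dp_def)
  have d3: "\<And>k. 1 \<le> k \<Longrightarrow> 3*(d mod 3^k) + 3 \<le> 3^k \<or> 3*(d mod 3^k) \<ge> 2*3^k + 0"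
    using D3_prop[OF dD] by simp
  have dW: "\<And>k. 1 \<le> k \<Longrightarrow> 3*(d mod 3^k) + 1 \<le> 3^k \<or> 3*(d mod 3^k) \<ge> 2*3^k + 0"
    using d3 by fastforce
  show "vp 3 (ibinom (2*int d) (int d)) = vp 3 (ibinom (3*int d) (int d))"
    by (rule part_a[OF p dW])
  show "vp 3 (ibinom (2*int d + 1) (int d)) = vp 3 (ibinom (3*int d + 2) (int d))"
    by (rule part_b[OF p d3])
  fix a :: int assume a: "0 \<le> a \<and> a \<le> 2*int d"
  show "vp 3 (ibinom a (int d) * ibinom (3*int d - a) (int d)) \<ge> vp 3 (ibinom (2*int d) (int d))"
    using part_c[OF p dW] a by blast
  show "vp 3 (ibinom a (int d) * ibinom (3*int d - 1 - a) (int d)) \<ge> vp 3 (ibinom (2*int d) (int d))"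
    using part_d[OF p dW] a by blast
  show "vp 3 (ibinom a (int d) * ibinom (3*int d + 1 - a) (int d + 1)) \<ge> vp 3 (ibinom (2*int d + 1) (int d))"
    using part_e[OF p d3] a by blast
next
  assume p5: "p \<ge> 5"
  have p: "prime p" by (rule assms(1))
  have dD: "d \<in> Dgen p" using assms(3) p5 by (simp add: Dp_def)
  have dP: "\<And>k. 1 \<le> k \<Longrightarrow> 3*(d mod p^k) + 1 \<le> p^k \<or> 3*(d mod p^k) \<ge> 2*p^k + 1"
    using Dgen_res[OF dD] p5 by simp
  have dW: "\<And>k. 1 \<le> k \<Longrightarrow> 3*(d mod p^k) + 1 \<le> p^k \<or> 3*(d mod p^k) \<ge> 2*p^k + 0"
    using dP by fastforce
  show "vp p (ibinom (2*int d) (int d)) = vp p (ibinom (3*int d) (int d))"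
    by (rule part_a[OF p dW])
  fix a :: int assume a: "0 \<le> a \<and> a \<le> 2*int d"
  show "vp p (ibinom a (int d) * ibinom (3*int d - a) (int d)) \<ge> vp p (ibinom (2*int d) (int d))"
    using part_c[OF p dW] a by blast
  show "vp p (ibinom a (int d) * ibinom (3*int d - 1 - a) (int d)) \<ge> vp p (ibinom (2*int d) (int d))"
    using part_d[OF p dW] a by blast
  show "vp p (ibinom a (int d - 1) * ibinom (3*int d - 2 - a) (int d)) \<ge> vp p (ibinom (2*int d) (int d))"
    using part_f[OF p p5 dP] a by blast
qed
end
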